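(* Let $\underline{Q}$ be a lower transition rate operator. Then for any $t>0$, any $x\in\mathcal{X}$ and any $A\subseteq\mathcal{X}$: \begin{equation*} \underline{T}_t\mathbb{I}_{A}(x)>0 ~~\Leftrightarrow~~ A\text{ is lower reachable from }x. \end{equation*}
   Context: $\mathcal{X}$ is a finite state space and $\mathcal{L}(\mathcal{X})$ is the set of real-valued functions on $\mathcal{X}$; $\mathbb{I}_S$ denotes the indicator of $S\subseteq\mathcal{X}$ (and $\mathbb{I}_x\coloneqq\mathbb{I}_{\{x\}}$), and $\mathbb{N}_0\coloneqq\mathbb{N}\cup\{0\}$. A lower transition rate operator is a map $\underline{Q}\colon\mathcal{L}(\mathcal{X})\to\mathcal{L}(\mathcal{X})$ such that for all $f,g\in\mathcal{L}(\mathcal{X})$, $\lambda\geq0$, $\mu\in\mathbb{R}$ and $x,y\in\mathcal{X}$: $\underline{Q}(\mu)=0$; $\underline{Q}(f+g)\geq\underline{Q}(f)+\underline{Q}(g)$; $\underline{Q}(\lambda f)=\lambda\underline{Q}(f)$; and $x\neq y\Rightarrow\underline{Q}(\mathbb{I}_y)(x)\geq0$. For each $t\geq0$, $\underline{T}_t$ is defined for every $f$ by the (uniquely solvable) differential equation $\frac{d}{dt}\underline{T}_tf=\underline{Q}\,\underline{T}_tf$ for all $t\geq0$ with $\underline{T}_0f=f$. Lower reachability: $A$ is lower reachable from $x$ if $x\in A_n$, where $A_0\coloneqq A$, $A_{k+1}\coloneqq A_k\cup\{y\in\mathcal{X}\setminus A_k\colon\underline{Q}(\mathbb{I}_{A_k})(y)>0\}$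 for $k\in\mathbb{N}_0$, and $n$ is the first index with $A_n=A_{n+1}$. *)

theory Defs
  imports "HOL-Analysis.Analysis"
begin

definition ind :: "'x::finite set \<Rightarrow> real^'x" where
  "ind A = (\<chi> y. if y \<in> A then 1 else 0)"

definition lower_rate_op :: "(real^'x::finite \<Rightarrow> real^'x) \<Rightarrow> bool" where
  "lower_rate_op Q \<longleftrightarrow>
     (\<forall>\<mu>::real. Q (\<chi> y. \<mu>) = 0) \<and>
     (\<forall>f g x. Q (f + g) $ x \<ge> Q f $ x + Q g $ x) \<and>
     (\<forall>f c::real. c \<ge> 0 \<longrightarrow> Q (c *\<^sub>R f) = c *\<^sub>R Q f) \<and>
     (\<forall>x y. x \<noteq> y \<longrightarrow> Q (ind {y}) $ x \<ge> 0)"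

definition is_lower_semigroup ::
  "(real^'x::finite \<Rightarrow> real^'x) \<Rightarrow> (real \<Rightarrow> real^'x \<Rightarrow> real^'x) \<Rightarrow> bool" where
  "is_lower_semigroup Q T \<longleftrightarrow>
     (\<forall>f. T 0 f = f \<and>
        (\<forall>t\<ge>0. ((\<lambda>s. T s f) has_vector_derivative Q (T t f)) (at t within {0..})))"

fun reach_seq :: "(real^'x::finite \<Rightarrow> real^'x) \<Rightarrow> 'x set \<Rightarrow> nat \<Rightarrow> 'x set" where
  "reach_seq Q A 0 = A"
| "reach_seq Q A (Suc k) = reach_seq Q A k \<union>
     {y. y \<notin> reach_seq Q A k \<and> Q (ind (reach_seq Q A k)) $ y > 0}"

definition lower_reachable :: "(real^'x::finite \<Rightarrow> real^'x) \<Rightarrow> 'x \<Rightarrow> 'x set \<Rightarrow> bool" where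
  "lower_reachable Q x A \<longleftrightarrow>
     x \<in> reach_seq Q A (LEAST n. reach_seq Q A n = reach_seq Q A (Suc n))"

end

theory Submission imports Defs begin

lemma cont_from_within:
  assumes D: "\<And>s. s \<ge> 0 \<Longrightarrow> (f has_real_derivative f' s) (at s within {0..})"
    and "0 \<le> a"
  shows "continuous_on {a..b} f"
proof -
  have "continuous (at s within {a..b}) f" if "s \<in> {a..b}" for s
  proof -
    have "continuous (at s within {0..}) f" using D[of s] that \<open>0\<le>a\<close> DERIV_continuous by auto
    then show ?thesis by (rule continuous_within_subset) (use \<open>0\<le>a\<close> in auto)
  qed
  then show ?thesis using continuous_on_eq_continuous_within by blast
qed

lemma at_pos: "(s::real) > 0 \<Longrightarrow> at s within {0..} = at s"
  by (rule at_within_interior) simp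

lemma incr_strict:
  assumes D: "\<And>s. s \<ge> 0 \<Longrightarrow> (f has_real_derivative f' s) (at s within {0..})"
    and "0 \<le> a" "a < b" and P: "\<And>s. a < s \<Longrightarrow> s < b \<Longrightarrow> f' s > 0"
  shows "f a < f b"
proof (rule DERIV_pos_imp_increasing_open[OF \<open>a<b\<close>])
  fix x assume x: "a < x" "x < b"
  then have "x > 0" using \<open>0\<le>a\<close> by auto
  then show "\<exists>y. DERIV f x :> y \<and> y > 0" using D[of x] P[OF x] at_pos[of x] by auto
qed (rule cont_from_within[OF D \<open>0\<le>a\<close>])

lemma incr_weak:
  assumes D: "\<And>s. s \<ge> 0 \<Longrightarrow> (f has_real_derivative f' s) (at s within {0..})"
    and "0 \<le> a" "a \<le> b" and P: "\<And>s. a < s \<Longrightarrow> s < b \<Longrightarrow> f' s \<ge> 0"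
  shows "f a \<le> f b"
proof (rule DERIV_nonneg_imp_increasing_open[OF \<open>a\<le>b\<close>])
  fix x assume x: "a < x" "x < b"
  then have "x > 0" using \<open>0\<le>a\<close> by auto
  then show "\<exists>y. DERIV f x :> y \<and> y \<ge> 0" using D[of x] P[OF x] at_pos[of x] by auto
qed (rule cont_from_within[OF D \<open>0\<le>a\<close>])

lemma gronwall0:
  assumes D: "\<And>s. s \<ge> 0 \<Longrightarrow> (f has_real_derivative f' s) (at s within {0..})"
    and B: "\<And>s. s \<ge> 0 \<Longrightarrow> f' s \<le> C * f s" and "f 0 \<le> 0" and "t \<ge> 0"
  shows "f t \<le> 0"
proof -
  define g where "g s = - (exp (- C * s) * f s)" for s
  have Dg: "(g has_real_derivative (- (exp (- C * s) * (f' s - C * f s)))) (at s within {0..})"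
    if "s \<ge> 0" for s
    unfolding g_def
    by (rule derivative_eq_intros refl D[OF that] | simp)+ (simp add: algebra_simps)
  have "g 0 \<le> g t"
    by (rule incr_weak[OF Dg]) (use B \<open>t\<ge>0\<close> in \<open>auto simp: mult_le_0_iff\<close>)
  then have "exp (- C * t) * f t \<le> f 0" by (simp add: g_def)
  then have "exp (- C * t) * f t \<le> 0" using \<open>f 0 \<le> 0\<close> by linarith
  then show ?thesis by (simp add: mult_le_0_iff)
qed

lemma DERIV_pp: "DERIV (\<lambda>x::real. (max x 0)^2) x :> 2 * max x 0"
proof (cases "x = 0")
  case True
  have "((\<lambda>y::real. ((max y 0)^2 - (max x 0)^2) / (y - x)) \<longlongrightarrow> 2 * max x 0) (at x)"
  proof -
    have e: "\<forall>\<^sub>F y in at x. max y 0 = ((max y 0)^2 - (max x 0)^2) / (y - x)"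
      unfolding eventually_at_filter using True by (auto simp: power2_eq_square max_def)
    have "((\<lambda>y::real. max y 0) \<longlongrightarrow> max x 0) (at x)"
      by (intro tendsto_intros)
    from Lim_transform_eventually[OF this e] show ?thesis using True by simp
  qed
  then show ?thesis by (simp add: has_field_derivative_iff)
next
  case False
  show ?thesis
  proof (cases "x > 0")
    case True
    have "DERIV (\<lambda>x::real. x^2) x :> 2 * x" by (rule derivative_eq_intros refl | simp)+
    then have "DERIV (\<lambda>x::real. x^2) x :> 2 * max x 0" using True by simp
    then show ?thesis
      by (rule has_field_derivative_transform_within_open[where S="{0<..}"]) (use True in auto)
  next
    case F: False
    have "DERIV (\<lambda>x::real. 0) x :> 2 * max x 0" using F False by simp
    then show ?thesis
      by (rule has_field_derivative_transform_within_open[where S="{..<0}"]) (use F False in auto)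
  qed
qed

lemma vanish:
  fixes a d :: "'y \<Rightarrow> real \<Rightarrow> real"
  assumes fin: "finite S" and K: "K \<ge> 0"
    and D: "\<And>y s. y \<in> S \<Longrightarrow> s \<ge> 0 \<Longrightarrow> (a y has_real_derivative d y s) (at s within {0..})"
    and B: "\<And>y s. y \<in> S \<Longrightarrow> s \<ge> 0 \<Longrightarrow> a y s > 0 \<Longrightarrow> d y s \<le> K * (\<Sum>z\<in>S. max (a z s) 0)"
    and I: "\<And>y. y \<in> S \<Longrightarrow> a y 0 \<le> 0"
    and t: "t \<ge> 0" and y: "y \<in> S"
  shows "a y t \<le> 0"
proof -
  define \<phi> where "\<phi> s = (\<Sum>y\<in>S. (max (a y s) 0)^2)" for s
  define \<phi>' where "\<phi>' s = (\<Sum>y\<in>S. 2 * max (a y s) 0 * d y s)" for s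
  have D\<phi>: "(\<phi> has_real_derivative \<phi>' s) (at s within {0..})" if "s \<ge> 0" for s
    unfolding \<phi>_def \<phi>'_def
    by (rule DERIV_sum) (rule DERIV_chain2[OF DERIV_pp D], auto simp: that)
  have B\<phi>: "\<phi>' s \<le> (2 * K * card S) * \<phi> s" if "s \<ge> 0" for s
  proof -
    have "\<phi>' s \<le> (\<Sum>y\<in>S. 2 * max (a y s) 0 * (K * (\<Sum>z\<in>S. max (a z s) 0)))"
      unfolding \<phi>'_def
    proof (rule sum_mono)
      fix y assume "y \<in> S"
      show "2 * max (a y s) 0 * d y s \<le> 2 * max (a y s) 0 * (K * (\<Sum>z\<in>S. max (a z s) 0))"
      proof (cases "a y s > 0")
        case True
        then show ?thesis using B[OF \<open>y\<in>S\<close> that True] by (simp add: max_def)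
      next
        case False
        then show ?thesis by (simp add: max_def)
      qed
    qed
    also have "\<dots> = 2 * K * (\<Sum>z\<in>S. max (a z s) 0)^2"
      by (simp add: sum_distrib_left[symmetric] sum_distrib_right[symmetric] power2_eq_square mult.assoc)
    also have "\<dots> \<le> 2 * K * ((\<Sum>z\<in>S. (max (a z s) 0)^2) * card S)"
      by (rule mult_left_mono[OF sum_squared_le_sum_of_squares]) (use K in auto)
    finally show ?thesis by (simp add: \<phi>_def algebra_simps)
  qed
  have "\<phi> 0 \<le> 0" unfolding \<phi>_def using I by (intro sum_nonpos) (simp add: max_def)
  have "\<phi> t \<le> 0" by (rule gronwall0[OF D\<phi> B\<phi> \<open>\<phi> 0 \<le> 0\<close> t])
  moreover have "(max (a y t) 0)^2 \<le> \<phi> t"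
    unfolding \<phi>_def by (rule member_le_sum[OF y]) (auto simp: fin)
  ultimately have "(max (a y t) 0)^2 \<le> 0" by linarith
  then show ?thesis by (simp add: max_def split: if_splits)
qed


definition Kc :: "(real^'x::finite \<Rightarrow> real^'x) \<Rightarrow> real" where
  "Kc Q = (\<Sum>z\<in>UNIV. \<Sum>y\<in>UNIV. \<bar>Q (ind {z}) $ y\<bar> + \<bar>Q (- ind {z}) $ y\<bar>)"

context
  fixes Q :: "real^'x::finite \<Rightarrow> real^'x"
  assumes LQ: "lower_rate_op Q"
begin

lemma Q0: "Q 0 = 0"
proof -
  have "(\<chi> y. (0::real)) = 0" by (simp add: vec_eq_iff)
  then show ?thesis using LQ unfolding lower_rate_op_def by metis
qed

lemma Qsup: "Q (f + g) $ x \<ge> Q f $ x + Q g $ x"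
  using LQ unfolding lower_rate_op_def by blast

lemma Qhom: "c \<ge> 0 \<Longrightarrow> Q (c *\<^sub>R f) = c *\<^sub>R Q f"
  using LQ unfolding lower_rate_op_def by blast

lemma Qoff: "x \<noteq> y \<Longrightarrow> Q (ind {y}) $ x \<ge> 0"
  using LQ unfolding lower_rate_op_def by blast

lemma Qsum: "finite I \<Longrightarrow> Q (\<Sum>i\<in>I. f i) $ y \<ge> (\<Sum>i\<in>I. Q (f i) $ y)"
proof (induction I rule: finite_induct)
  case empty
  then show ?case by (simp add: Q0)
next
  case (insert i I)
  have "Q (f i + (\<Sum>i\<in>I. f i)) $ y \<ge> Q (f i) $ y + Q (\<Sum>i\<in>I. f i) $ y" by (rule Qsup)
  then show ?case using insert by simp
qed

lemma decomp: "(\<Sum>z\<in>S. (v $ z) *\<^sub>R ind {z}) $ w = (if w \<in> S then v $ w else 0)"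
proof -
  have "(\<Sum>z\<in>S. (v $ z) *\<^sub>R ind {z}) $ w = (\<Sum>z\<in>S. v $ z * (if w = z then 1 else 0))"
    by (simp add: ind_def)
  also have "\<dots> = (\<Sum>z\<in>S. if w = z then v $ w else 0)" by (rule sum.cong) auto
  also have "\<dots> = (if w \<in> S then v $ w else 0)" by (simp add: sum.delta[OF finite])
  finally show ?thesis .
qed

lemma Qnonneg:
  assumes "\<And>z. f $ z \<ge> 0" "f $ y = 0"
  shows "Q f $ y \<ge> 0"
proof -
  have f: "f = (\<Sum>z\<in>UNIV-{y}. (f $ z) *\<^sub>R ind {z})"
    by (subst vec_eq_iff) (simp only: decomp, use assms in auto)
  have "(\<Sum>z\<in>UNIV-{y}. Q ((f $ z) *\<^sub>R ind {z}) $ y) \<le> Q f $ y"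
    by (subst (2) f) (rule Qsum, simp)
  moreover have "(\<Sum>z\<in>UNIV-{y}. Q ((f $ z) *\<^sub>R ind {z}) $ y) \<ge> 0"
    using assms(1) Qoff by (intro sum_nonneg) (simp add: Qhom)
  ultimately show ?thesis by linarith
qed

lemma Qmono:
  assumes "\<And>z. f $ z \<le> g $ z" "f $ y = g $ y"
  shows "Q f $ y \<le> Q g $ y"
proof -
  have "Q (f + (g - f)) $ y \<ge> Q f $ y + Q (g - f) $ y" by (rule Qsup)
  moreover have "Q (g - f) $ y \<ge> 0" by (rule Qnonneg) (use assms in auto)
  ultimately show ?thesis by simp
qed

lemma Qtrans: "Q (f + (\<chi> y. \<mu>)) = Q f"
proof -
  have c: "Q (\<chi> y. c) = 0" for c using LQ unfolding lower_rate_op_def by blast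
  have "Q (f + (\<chi> y. \<mu>)) $ x \<ge> Q f $ x" for x using Qsup[where f=f and g="\<chi> y. \<mu>" and x=x] c by simp
  moreover have "Q f $ x \<ge> Q (f + (\<chi> y. \<mu>)) $ x" for x
  proof -
    have eq: "(f + (\<chi> y. \<mu>)) + (\<chi> y. - \<mu>) = f" by (simp add: vec_eq_iff)
    have "Q (f + (\<chi> y. \<mu>)) $ x + Q (\<chi> y. - \<mu>) $ x \<le> Q ((f + (\<chi> y. \<mu>)) + (\<chi> y. - \<mu>)) $ x" by (rule Qsup)
    then show ?thesis by (simp only: eq c) simp
  qed
  ultimately show ?thesis by (simp add: vec_eq_iff order_antisym)
qed

lemma Kc_ge: "\<bar>Q (ind {z}) $ y\<bar> + \<bar>Q (- ind {z}) $ y\<bar> \<le> Kc Q"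
proof -
  have "\<bar>Q (ind {z}) $ y\<bar> + \<bar>Q (- ind {z}) $ y\<bar> \<le> (\<Sum>y\<in>UNIV. \<bar>Q (ind {z}) $ y\<bar> + \<bar>Q (- ind {z}) $ y\<bar>)"
    by (rule member_le_sum) auto
  also have "\<dots> \<le> Kc Q" unfolding Kc_def
    by (rule member_le_sum[where f="\<lambda>z. \<Sum>y\<in>UNIV. \<bar>Q (ind {z}) $ y\<bar> + \<bar>Q (- ind {z}) $ y\<bar>"])
       (auto intro: sum_nonneg)
  finally show ?thesis .
qed

lemma Kc_nonneg: "Kc Q \<ge> 0"
  by (simp add: Kc_def sum_nonneg)

lemma Qsingle: "\<bar>Q (c *\<^sub>R ind {z}) $ y\<bar> \<le> \<bar>c\<bar> * Kc Q"
proof (cases "c \<ge> 0")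
  case True
  then have "\<bar>Q (c *\<^sub>R ind {z}) $ y\<bar> = \<bar>c\<bar> * \<bar>Q (ind {z}) $ y\<bar>" by (simp add: Qhom abs_mult)
  also have "\<dots> \<le> \<bar>c\<bar> * Kc Q" using Kc_ge[of z y] by (intro mult_left_mono) auto
  finally show ?thesis .
next
  case False
  have "Q (c *\<^sub>R ind {z}) = (- c) *\<^sub>R Q (- ind {z})" using Qhom[of "-c" "-ind {z}"] False by simp
  then have "\<bar>Q (c *\<^sub>R ind {z}) $ y\<bar> = \<bar>c\<bar> * \<bar>Q (- ind {z}) $ y\<bar>"
    using False by (simp add: Qhom abs_mult)
  also have "\<dots> \<le> \<bar>c\<bar> * Kc Q" using Kc_ge[of z y] by (intro mult_left_mono) auto
  finally show ?thesis .
qed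

lemma Qlow: "Q h $ y \<ge> - (Kc Q * (\<Sum>z\<in>UNIV. \<bar>h $ z\<bar>))"
proof -
  have f: "h = (\<Sum>z\<in>UNIV. (h $ z) *\<^sub>R ind {z})"
    by (subst vec_eq_iff) (simp only: decomp, auto)
  have "(\<Sum>z\<in>UNIV. Q ((h $ z) *\<^sub>R ind {z}) $ y) \<le> Q (\<Sum>z\<in>UNIV. (h $ z) *\<^sub>R ind {z}) $ y"
    by (rule Qsum) simp
  then have "(\<Sum>z\<in>UNIV. Q ((h $ z) *\<^sub>R ind {z}) $ y) \<le> Q h $ y" by (simp only: f[symmetric])
  moreover have "(\<Sum>z\<in>UNIV. Q ((h $ z) *\<^sub>R ind {z}) $ y) \<ge> (\<Sum>z\<in>UNIV. - (\<bar>h $ z\<bar> * Kc Q))"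
  proof (intro sum_mono)
    fix z
    show "- (\<bar>h $ z\<bar> * Kc Q) \<le> Q ((h $ z) *\<^sub>R ind {z}) $ y"
      using Qsingle[where c="h $ z" and z=z and y=y] by (simp add: abs_le_iff)
  qed
  ultimately show ?thesis by (simp add: sum_distrib_left sum_negf mult.commute)
qed

lemma Qup: "Q h $ y \<le> Kc Q * (\<Sum>z\<in>UNIV. \<bar>h $ z\<bar>)"
proof -
  have "Q (h + (- h)) $ y \<ge> Q h $ y + Q (- h) $ y" by (rule Qsup)
  then show ?thesis using Qlow[of "- h" y] by (simp add: Q0)
qed

end

context
  fixes Q :: "real^'x::finite \<Rightarrow> real^'x"
  assumes LQ: "lower_rate_op Q"
begin

lemma Bneg:
  assumes "v $ y < 0"
  shows "Q v $ y \<ge> - (Kc Q * (\<Sum>z\<in>UNIV. max (- (v $ z)) 0))"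
proof -
  define p where "p = (\<chi> z. max (v $ z) 0)"
  define n where "n = (\<chi> z. max (- (v $ z)) 0)"
  have v: "v = p + (- n)" by (simp add: vec_eq_iff p_def n_def max_def)
  have "Q (p + (- n)) $ y \<ge> Q p $ y + Q (- n) $ y" by (rule Qsup[OF LQ])
  moreover have "Q p $ y \<ge> 0" by (rule Qnonneg[OF LQ]) (use assms in \<open>auto simp: p_def\<close>)
  moreover have "Q (- n) $ y \<ge> - (Kc Q * (\<Sum>z\<in>UNIV. \<bar>(- n) $ z\<bar>))" by (rule Qlow[OF LQ])
  moreover have "(\<Sum>z\<in>UNIV. \<bar>(- n) $ z\<bar>) = (\<Sum>z\<in>UNIV. max (- (v $ z)) 0)"
    by (simp add: n_def)
  ultimately show ?thesis using v by simp
qed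

lemma Bgt1:
  assumes "v $ y > 1"
  shows "Q v $ y \<le> Kc Q * (\<Sum>z\<in>UNIV. max (v $ z - 1) 0)"
proof -
  define w where "w = v + (\<chi> z. - 1)"
  have "w + (\<chi> z. 1) = v" by (simp add: vec_eq_iff w_def)
  then have Qv: "Q v = Q w" using Qtrans[OF LQ, of w 1] by simp
  define p where "p = (\<chi> z. max (w $ z) 0)"
  define n where "n = (\<chi> z. max (- (w $ z)) 0)"
  have p: "p = w + n" by (simp add: vec_eq_iff p_def n_def max_def)
  have "Q (w + n) $ y \<ge> Q w $ y + Q n $ y" by (rule Qsup[OF LQ])
  moreover have "Q n $ y \<ge> 0" by (rule Qnonneg[OF LQ]) (use assms in \<open>auto simp: n_def w_def\<close>)
  moreover have "Q p $ y \<le> Kc Q * (\<Sum>z\<in>UNIV. \<bar>p $ z\<bar>)" by (rule Qup[OF LQ])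
  moreover have "(\<Sum>z\<in>UNIV. \<bar>p $ z\<bar>) = (\<Sum>z\<in>UNIV. max (v $ z - 1) 0)"
    by (simp add: p_def w_def)
  ultimately show ?thesis using p Qv by simp
qed

lemma Breach:
  assumes QB: "Q (ind B) $ y \<le> 0" and yB: "y \<notin> B" and le1: "\<And>z. v $ z \<le> 1" and pos: "v $ y > 0"
  shows "Q v $ y \<le> Kc Q * (\<Sum>z\<in>-B. max (v $ z) 0)"
proof -
  define h where "h = (\<chi> z. if z \<in> B then 0 else max (v $ z) 0)"
  define g where "g = ind B + h"
  have "Q v $ y \<le> Q g $ y"
    by (rule Qmono[OF LQ]) (use le1 yB pos in \<open>auto simp: g_def h_def ind_def max_def\<close>)
  moreover have "Q (g + (- h)) $ y \<ge> Q g $ y + Q (- h) $ y" by (rule Qsup[OF LQ])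
  moreover have "g + (- h) = ind B" by (simp add: g_def)
  moreover have "Q (- h) $ y \<ge> - (Kc Q * (\<Sum>z\<in>UNIV. \<bar>(- h) $ z\<bar>))" by (rule Qlow[OF LQ])
  moreover have "(\<Sum>z\<in>UNIV. \<bar>(- h) $ z\<bar>) = (\<Sum>z\<in>-B. max (v $ z) 0)"
  proof -
    have "(\<Sum>z\<in>UNIV. \<bar>(- h) $ z\<bar>) = (\<Sum>z\<in>UNIV. if z \<in> -B then max (v $ z) 0 else 0)"
      by (rule sum.cong) (auto simp: h_def)
    also have "\<dots> = (\<Sum>z\<in>-B. max (v $ z) 0)" by (simp add: sum.If_cases Compl_eq)
    finally show ?thesis .
  qed
  ultimately show ?thesis using QB by simp
qed

lemma Bstep:
  assumes nn: "\<And>z. v $ z \<ge> 0" and d: "\<delta> \<ge> 0" and C: "\<And>z. z \<in> C \<Longrightarrow> v $ z \<ge> \<delta>" and yC: "y \<notin> C"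
  shows "Q v $ y \<ge> \<delta> * Q (ind C) $ y - Kc Q * v $ y"
proof -
  define f where "f = \<delta> *\<^sub>R ind C + (v $ y) *\<^sub>R ind {y}"
  have "Q f $ y \<le> Q v $ y"
    by (rule Qmono[OF LQ]) (use nn d C yC in \<open>auto simp: f_def ind_def\<close>)
  moreover have "Q f $ y \<ge> Q (\<delta> *\<^sub>R ind C) $ y + Q ((v $ y) *\<^sub>R ind {y}) $ y"
    unfolding f_def by (rule Qsup[OF LQ])
  moreover have "Q (\<delta> *\<^sub>R ind C) $ y = \<delta> * Q (ind C) $ y" using Qhom[OF LQ d] by simp
  moreover have "Q ((v $ y) *\<^sub>R ind {y}) $ y = v $ y * Q (ind {y}) $ y" using Qhom[OF LQ nn[of y]] by simp
  moreover have "Q (ind {y}) $ y \<ge> - Kc Q" using Qsingle[OF LQ, where c=1 and z=y and y=y] by simp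
  moreover have "v $ y * Q (ind {y}) $ y \<ge> - (Kc Q * v $ y)"
    using mult_left_mono[OF calculation(5) nn[of y]] by (simp add: mult.commute)
  ultimately show ?thesis by linarith
qed

lemma Blow:
  assumes nn: "\<And>z. v $ z \<ge> 0"
  shows "Q v $ y \<ge> - (Kc Q * v $ y)"
  using Bstep[OF nn, of 0 "{}" y] by simp

end

lemma reach_mono_le: "m \<le> n \<Longrightarrow> reach_seq Q A m \<subseteq> reach_seq Q A n"
  by (induction n rule: dec_induct) auto

lemma reach_stab: "\<exists>n. reach_seq Q A n = reach_seq Q A (Suc n)"
proof (rule ccontr)
  assume H: "\<not> ?thesis"
  have "card (reach_seq Q A n) \<ge> n" for n
  proof (induction n)
    case (Suc n)
    have "reach_seq Q A n \<subset> reach_seq Q A (Suc n)" using H by auto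
    then have "card (reach_seq Q A n) < card (reach_seq Q A (Suc n))"
      by (rule psubset_card_mono[OF finite])
    then show ?case using Suc by simp
  qed simp
  moreover have "card (reach_seq Q A (Suc CARD('a))) \<le> CARD('a)"
    by (rule card_mono) auto
  ultimately show False using le_trans not_less_eq_eq by blast
qed

theorem proposition12:
  fixes Q :: "real^'x::finite \<Rightarrow> real^'x"
    and T :: "real \<Rightarrow> real^'x \<Rightarrow> real^'x"
  assumes "lower_rate_op Q"
    and "is_lower_semigroup Q T"
    and "t > 0"
  shows "T t (ind A) $ x > 0 \<longleftrightarrow> lower_reachable Q x A"
proof -
  note LQ = assms(1)
  define u where "u s = T s (ind A)" for s
  have u0: "u 0 = ind A" using assms(2) by (simp add: is_lower_semigroup_def u_def)
  have Du: "((\<lambda>s. u s $ y) has_real_derivative Q (u s) $ y) (at s within {0..})" if "s \<ge> 0" for s y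
  proof -
    have "((\<lambda>s. T s (ind A)) has_vector_derivative Q (T s (ind A))) (at s within {0..})"
      using assms(2) that unfolding is_lower_semigroup_def by blast
    from bounded_linear.has_vector_derivative[OF bounded_linear_vec_nth this, of y] show ?thesis
      by (simp add: has_real_derivative_iff_has_vector_derivative u_def)
  qed
  have K: "Kc Q \<ge> 0" by (rule Kc_nonneg[OF LQ])
  have nonneg: "u s $ y \<ge> 0" if s: "s \<ge> 0" for s y
  proof -
    have "- (u s $ y) \<le> 0"
    proof (rule vanish[where a="\<lambda>y s. - (u s $ y)" and d="\<lambda>y s. - (Q (u s) $ y)" and S=UNIV and K="Kc Q"])
      fix y :: 'x and s :: real assume "s \<ge> 0"
      then show "((\<lambda>s. - (u s $ y)) has_real_derivative - (Q (u s) $ y)) (at s within {0..})"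
        using Du by (intro DERIV_minus) auto
    next
      fix y :: 'x and s :: real assume "- (u s $ y) > 0"
      then show "- (Q (u s) $ y) \<le> Kc Q * (\<Sum>z\<in>UNIV. max (- (u s $ z)) 0)"
        using Bneg[OF LQ, of "u s" y] by simp
    qed (use K s u0 in \<open>auto simp: ind_def\<close>)
    then show ?thesis by simp
  qed
  have le1: "u s $ y \<le> 1" if s: "s \<ge> 0" for s y
  proof -
    have "u s $ y - 1 \<le> 0"
    proof (rule vanish[where a="\<lambda>y s. u s $ y - 1" and d="\<lambda>y s. Q (u s) $ y" and S=UNIV and K="Kc Q"])
      fix y :: 'x and s :: real assume "s \<ge> 0"
      then show "((\<lambda>s. u s $ y - 1) has_real_derivative Q (u s) $ y) (at s within {0..})"
        using Du[of s y] DERIV_diff[OF Du[of s y] DERIV_const[of 1]] by simp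
    next
      fix y :: 'x and s :: real assume "u s $ y - 1 > 0"
      then show "Q (u s) $ y \<le> Kc Q * (\<Sum>z\<in>UNIV. max (u s $ z - 1) 0)"
        using Bgt1[OF LQ, of "u s" y] by simp
    qed (use K s u0 in \<open>auto simp: ind_def\<close>)
    then show ?thesis by simp
  qed
  define R where "R n = reach_seq Q A n" for n
  define N where "N = (LEAST n. R n = R (Suc n))"
  have stab: "R N = R (Suc N)" unfolding N_def R_def by (rule LeastI_ex[OF reach_stab])
  have LR: "lower_reachable Q x A \<longleftrightarrow> x \<in> R N" by (simp add: lower_reachable_def N_def R_def)
  show ?thesis
  proof
    assume pos: "T t (ind A) $ x > 0"
    show "lower_reachable Q x A"
    proof (rule ccontr)
      assume "\<not> lower_reachable Q x A"
      then have xN: "x \<notin> R N" using LR by simp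
      have QB: "Q (ind (R N)) $ y \<le> 0" if "y \<notin> R N" for y
      proof (rule ccontr)
        assume "\<not> ?thesis"
        then have "y \<in> R (Suc N)" using that by (simp add: R_def)
        then show False using stab that by simp
      qed
      have AN: "A \<subseteq> R N" using reach_mono_le[of 0 N Q A] by (simp add: R_def)
      have "u t $ x \<le> 0"
      proof (rule vanish[where a="\<lambda>y s. u s $ y" and d="\<lambda>y s. Q (u s) $ y" and S="- R N" and K="Kc Q"])
        fix y :: 'x and s :: real assume "s \<ge> 0"
        then show "((\<lambda>s. u s $ y) has_real_derivative Q (u s) $ y) (at s within {0..})"
          using Du by simp
      next
        fix y :: 'x and s :: real assume y: "y \<in> - R N" and s: "s \<ge> 0" and p: "u s $ y > 0"
        show "Q (u s) $ y \<le> Kc Q * (\<Sum>z\<in>- R N. max (u s $ z) 0)"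
          by (rule Breach[OF LQ QB]) (use y s p le1 in auto)
      qed (use K u0 AN xN assms(3) in \<open>auto simp: ind_def\<close>)
      then show False using pos by (simp add: u_def)
    qed
  next
    assume "lower_reachable Q x A"
    then have xN: "x \<in> R N" using LR by simp
    define \<psi>' where "\<psi>' y r = exp (Kc Q * r) * (Q (u r) $ y + Kc Q * u r $ y)" for y r
    have D\<psi>: "((\<lambda>r. exp (Kc Q * r) * u r $ y) has_real_derivative \<psi>' y r) (at r within {0..})"
      if r: "r \<ge> 0" for y r
    proof -
      have e: "((\<lambda>r. exp (Kc Q * r)) has_real_derivative exp (Kc Q * r) * Kc Q) (at r within {0..})"
        by (rule derivative_eq_intros refl | simp)+
      show ?thesis
        by (rule DERIV_cong[OF DERIV_mult[OF e Du[OF r]]]) (simp add: \<psi>'_def algebra_simps)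
    qed
    have "\<forall>y\<in>R k. \<forall>s>0. u s $ y > 0" for k
    proof (induction k)
      case 0
      show ?case
      proof (intro ballI allI impI)
        fix y s assume y: "y \<in> R 0" and s: "(s::real) > 0"
        have "exp (Kc Q * 0) * u 0 $ y \<le> exp (Kc Q * s) * u s $ y"
        proof (rule incr_weak[OF D\<psi>])
          fix r assume "0 < r" "r < s"
          then show "\<psi>' y r \<ge> 0" unfolding \<psi>'_def
            using Blow[OF LQ, of "u r" y] nonneg by (intro mult_nonneg_nonneg) auto
        qed (use s in auto)
        then have "exp (Kc Q * s) * u s $ y \<ge> 1" using y u0 by (simp add: R_def ind_def)
        then show "u s $ y > 0"
          by (smt (verit) exp_gt_zero mult_nonneg_nonpos)
      qed
    next
      case (Suc k)
      show ?case
      proof (intro ballI allI impI)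
        fix y s assume y: "y \<in> R (Suc k)" and s: "(s::real) > 0"
        show "u s $ y > 0"
        proof (cases "y \<in> R k")
          case True
          then show ?thesis using Suc s by blast
        next
          case False
          then have c: "Q (ind (R k)) $ y > 0" using y by (simp add: R_def)
          have "\<forall>z\<in>R k. \<exists>\<delta>>0. \<forall>r\<in>{s/2..s}. u r $ z \<ge> \<delta>"
          proof
            fix z assume z: "z \<in> R k"
            have "continuous_on {s/2..s} (\<lambda>r. u r $ z)"
              by (rule cont_from_within[OF Du]) (use s in auto)
            then obtain r0 where r0: "r0 \<in> {s/2..s}" "\<forall>r\<in>{s/2..s}. u r0 $ z \<le> u r $ z"
              using continuous_attains_inf[of "{s/2..s}" "\<lambda>r. u r $ z"] s by auto
            have "u r0 $ z > 0" using Suc z r0(1) s by auto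
            then show "\<exists>\<delta>>0. \<forall>r\<in>{s/2..s}. u r $ z \<ge> \<delta>" using r0(2) by blast
          qed
          then obtain \<delta> where \<delta>: "\<forall>z\<in>R k. \<delta> z > 0 \<and> (\<forall>r\<in>{s/2..s}. u r $ z \<ge> \<delta> z)"
            by metis
          define \<delta>0 where "\<delta>0 = Min (insert 1 (\<delta> ` R k))"
          have \<delta>0: "\<delta>0 > 0" unfolding \<delta>0_def using \<delta> by (subst Min_gr_iff) auto
          have \<delta>0le: "\<delta>0 \<le> \<delta> z" if "z \<in> R k" for z
            unfolding \<delta>0_def using that by (intro Min_le) auto
          have "exp (Kc Q * (s/2)) * u (s/2) $ y < exp (Kc Q * s) * u s $ y"
          proof (rule incr_strict[OF D\<psi>])
            fix r assume r: "s/2 < r" "r < s"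
            have "Q (u r) $ y \<ge> \<delta>0 * Q (ind (R k)) $ y - Kc Q * u r $ y"
            proof (rule Bstep[OF LQ])
              show "\<And>z. u r $ z \<ge> 0" using nonneg r s by auto
              show "\<And>z. z \<in> R k \<Longrightarrow> \<delta>0 \<le> u r $ z"
                using \<delta> \<delta>0le r by (meson atLeastAtMost_iff less_eq_real_def order_trans)
            qed (use \<delta>0 False in auto)
            moreover have "\<delta>0 * Q (ind (R k)) $ y > 0" using \<delta>0 c by simp
            ultimately show "\<psi>' y r > 0" unfolding \<psi>'_def by simp
          qed (use s in auto)
          moreover have "exp (Kc Q * (s/2)) * u (s/2) $ y \<ge> 0" using nonneg s by simp
          ultimately have "exp (Kc Q * s) * u s $ y > 0" by linarith
          then show ?thesis by (simp add: zero_less_mult_iff)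
        qed
      qed
    qed
    then show "T t (ind A) $ x > 0" using xN assms(3) by (simp add: u_def)
  qed
qed

end
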